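(* Let $N\ge 2$, $C\ge 0$ and $k\ge 1$ be integers with $C<\frac{N-1}{2}$, $k\le N-1$, and $$\binom{N-1-C}{k}\ \ge\ \frac{1}{2}\binom{N-1}{k}.$$ Let $\mathcal{A}$ be a discrete (finite or countable) action space, $\mathcal{O}$ an observation space and $\mathcal{M}$ a message space, and let $\hat{\pi}:\mathcal{O}\times\mathcal{M}^k\to\mathcal{A}$ be any function (the ablation policy). Fix an observation $o\in\mathcal{O}$ and two message lists $\mathbf{m}_{\mathrm{benign}},\mathbf{m}_{\mathrm{adv}}\in\mathcal{M}^{N-1}$ that differ in at most $C$ coordinates. Define the benign action set $$\mathcal{A}_{\mathrm{benign}}:=\bigcup_{T\in\mathcal{H}(N-1,k)}\{\hat{\pi}(o,\mathsf{Ablate}(\mathbf{m}_{\mathrm{benign}},T))\},$$ for each $a\in\mathcal{A}$ define the vote count on the adversarial list $$u_a:=\sum_{T\in\mathcal{H}(N-1,k)}\mathbb{1}\big[\hat{\pi}(o,\mathsf{Ablate}(\mathbf{m}_{\mathrm{adv}},T))=a\big],$$ and let $\widetilde{a}=\widetilde{\pi}(o,\mathbf{m}_{\mathrm{adv}})\in\arg\max_{a\in\mathcal{A}}u_a$. If $$u_{\widetilde{a}}>\binom{N-1}{k}-\binom{N-1-C}{k},$$ then $\widetilde{a}\in\mathcal{A}_{\mathrm{benign}}$.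
   Context: For a list $\mathbf{m}=[m_1,\dots,m_n]$ and a set of indices $T=\{j_1<\dots<j_k\}\subseteq[n]$, $\mathsf{Ablate}(\mathbf{m},T):=[m_{j_1},\dots,m_{j_k}]$ keeps only the entries indexed by $T$. For integers $n\ge k\ge 1$, $\mathcal{H}(n,k)$ denotes the set of all $k$-element subsets of $[n]=\{1,\dots,n\}$, so $|\mathcal{H}(n,k)|=\binom{n}{k}$. Setting: an agent in a communicative multi-agent system receives $N-1$ messages from the other agents; an adversary may corrupt up to $C$ of them, so the received list $\mathbf{m}_{\mathrm{adv}}$ differs from the uncorrupted list $\mathbf{m}_{\mathrm{benign}}$ in at most $C$ positions. The ensemble policy $\widetilde{\pi}(o,\mathbf{m})$ outputs an action maximizing the number of size-$k$ index subsets $T$ on which $\hat{\pi}(o,\mathsf{Ablate}(\mathbf{m},T))$ equals that action. *)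

theory Defs
  imports Main "HOL-Library.Countable"
begin

text \<open>Indices are 0-based: a message list of length n is indexed by {0..<n}.\<close>

definition Ablate :: "'m list \<Rightarrow> nat set \<Rightarrow> 'm list" where
  "Ablate m T = nths m T"

definition H :: "nat \<Rightarrow> nat \<Rightarrow> nat set set" where
  "H n k = {T. T \<subseteq> {..<n} \<and> card T = k}"

definition benign_actions ::
  "('o \<Rightarrow> 'm list \<Rightarrow> 'a) \<Rightarrow> 'o \<Rightarrow> 'm list \<Rightarrow> nat \<Rightarrow> nat \<Rightarrow> 'a set" where
  "benign_actions pihat obs m n k = (\<Union>T\<in>H n k. {pihat obs (Ablate m T)})"

definition votes ::
  "('o \<Rightarrow> 'm list \<Rightarrow> 'a) \<Rightarrow> 'o \<Rightarrow> 'm list \<Rightarrow> nat \<Rightarrow> nat \<Rightarrow> 'a \<Rightarrow> nat" where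
  "votes pihat obs m n k a = (\<Sum>T\<in>H n k. if pihat obs (Ablate m T) = a then 1 else 0)"

end

theory Submission
  imports Defs
begin

lemma nths_eq_on:
  "length xs = length ys \<Longrightarrow> (\<forall>i\<in>T. i < length xs \<longrightarrow> xs ! i = ys ! i)
   \<Longrightarrow> nths xs T = nths ys T"
proof (induction xs ys arbitrary: T rule: list_induct2)
  case Nil
  then show ?case by simp
next
  case (Cons x xs y ys)
  have "x = y \<or> 0 \<notin> T" using Cons.prems by force
  moreover have "nths xs {j. Suc j \<in> T} = nths ys {j. Suc j \<in> T}"
    using Cons.prems Cons.hyps by (intro Cons.IH) auto
  ultimately show ?case by (auto simp: nths_Cons)
qed

theorem theorem1:
  fixes N C k :: nat
    and pihat :: "'o \<Rightarrow> 'm list \<Rightarrow> 'a::countable"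
    and obs :: 'o
    and m_benign m_adv :: "'m list"
    and a_tilde :: 'a
  assumes "N \<ge> 2" and "k \<ge> 1"
    and "2 * C < N - 1" and "k \<le> N - 1"
    and "2 * ((N - 1 - C) choose k) \<ge> (N - 1) choose k"
    and "length m_benign = N - 1" and "length m_adv = N - 1"
    and "card {i. i < N - 1 \<and> m_benign ! i \<noteq> m_adv ! i} \<le> C"
    and "\<forall>a. votes pihat obs m_adv (N - 1) k a \<le> votes pihat obs m_adv (N - 1) k a_tilde"
    and "int (votes pihat obs m_adv (N - 1) k a_tilde)
           > int ((N - 1) choose k) - int ((N - 1 - C) choose k)"
  shows "a_tilde \<in> benign_actions pihat obs m_benign (N - 1) k"
proof (rule ccontr)
  assume nb: "a_tilde \<notin> benign_actions pihat obs m_benign (N - 1) k"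
  define n where "n = N - 1"
  define D where "D = {i. i < n \<and> m_benign ! i \<noteq> m_adv ! i}"
  define G where "G = {T. T \<subseteq> {..<n} - D \<and> card T = k}"
  define V where "V = {T \<in> H n k. pihat obs (Ablate m_adv T) = a_tilde}"
  have finH: "finite (H n k)" unfolding H_def by (rule finite_subset[of _ "Pow {..<n}"]) auto
  have cD: "card D \<le> C" using assms(8) unfolding D_def n_def by simp
  have DS: "D \<subseteq> {..<n}" unfolding D_def by auto
  have cG: "card G = (n - card D) choose k"
    unfolding G_def by (subst n_subsets) (use DS finite_subset[OF DS] in \<open>auto simp: card_Diff_subset\<close>)
  have cG2: "(n - C) choose k \<le> card G"
    unfolding cG by (rule binomial_right_mono) (use cD in linarith)
  have GH: "G \<subseteq> H n k" unfolding G_def H_def by auto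
  have "V \<subseteq> H n k - G"
  proof
    fix T assume T: "T \<in> V"
    show "T \<in> H n k - G"
    proof (rule ccontr)
      assume "T \<notin> H n k - G"
      hence "T \<in> G" using T unfolding V_def by auto
      hence "Ablate m_adv T = Ablate m_benign T"
        unfolding Ablate_def G_def D_def using assms(6,7) unfolding n_def
        by (intro nths_eq_on) auto
      moreover have "T \<in> H n k" using \<open>T \<in> G\<close> GH by auto
      ultimately show False using nb T unfolding V_def benign_actions_def n_def by auto
    qed
  qed
  hence "card V \<le> card (H n k - G)" using finH by (intro card_mono) auto
  also have "\<dots> = card (H n k) - card G" using GH finH by (intro card_Diff_subset) (auto intro: finite_subset)
  also have cHn: "card (H n k) = n choose k" unfolding H_def using n_subsets[of "{..<n}" k] by simp
  finally have "card V \<le> (n choose k) - card G" .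
  moreover have "votes pihat obs m_adv n k a_tilde = card V"
    unfolding votes_def V_def using finH by (simp add: sum.If_cases Int_def conj_commute)
  moreover have "card G \<le> n choose k"
    using card_mono[OF finH GH] cHn by simp
  ultimately show False using assms(10) cG2 unfolding n_def by linarith
qed

end
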